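(* With the icosahedral setting of the context, let $\omega>0$, let $p$ be a homogeneous polynomial of degree $n$ in $x\in\mathbb{R}^3$ and let $y_0\in\mathcal{I}$. Then \[ \langle p,q_n(\cdot;y_0)\rangle_{\kappa,\omega}=(2\omega)^{-n}\nu(n)\,p(y_0). \]
   Context: Let $\tau=(1+\sqrt5)/2$. Vectors in $\mathbb{R}^3$ are row vectors; $\langle x,y\rangle=\sum x_iy_i$. For $v\neq0$, $x\sigma_v=x-2\frac{\langle x,v\rangle}{|v|^2}v$. Let $R_+=\{(2,0,0),(0,2,0),(0,0,2),(\tau,\pm\tau^{-1},\pm1),(\pm1,\tau,\pm\tau^{-1}),(\tau^{-1},\pm1,\tau),(-\tau^{-1},1,\tau),(\tau^{-1},1,-\tau)\}$ (15 vectors, signs independent). For real $\kappa\ge0$ the Dunkl operators are $\mathcal{D}_if(x)=\partial_if(x)+\kappa\sum_{v\in R_+}\frac{f(x)-f(x\sigma_v)}{\langle x,v\rangle}v_i$; they commute pairwise. For polynomials $p,q$ define the bilinear form $\langle p,q\rangle_{\kappa,\omega}=p\left(\frac{1}{2\omega}\mathcal{D}_1,\frac{1}{2\omega}\mathcal{D}_2,\frac{1}{2\omega}\mathcal{D}_3\right)q(x)\big|_{x=0}$. Let $\mathcal{I}=\{(0,\pm\tau,\pm1),(\pm1,0,\pm\tau),(\pm\tau,\pm1,0)\}$. For $y_0\in\mathcal{I}$, $q_n(x;y_0)$ are defined by $\left(1-r\langle x,y_0\rangle\right)^{-1}\prod_{y\in\mathcal{I}}\left(1-r\langle x,y\rangle\right)^{-\kappa}=\sum_{n\ge0}q_n(x;y_0)r^n$.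 Define $\nu(n)=2^n(6\kappa+1)_s(5\kappa+\tfrac12)_t$ with $s=\lfloor n/2\rfloor$, $t=\lfloor (n+1)/2\rfloor$, $(a)_k=a(a+1)\cdots(a+k-1)$. *)

theory Defs
  imports "HOL-Analysis.Analysis" "HOL-Computational_Algebra.Formal_Power_Series"
begin

definition tau :: real where "tau = (1 + sqrt 5) / 2"

definition vec3 :: "real \<Rightarrow> real \<Rightarrow> real \<Rightarrow> real^3" where
  "vec3 a b c = (\<chi> i. if i = 1 then a else if i = 2 then b else c)"

definition refl :: "real^3 \<Rightarrow> real^3 \<Rightarrow> real^3" where
  "refl v x = x - (2 * (x \<bullet> v) / (v \<bullet> v)) *\<^sub>R v"

definition Rplus :: "(real^3) set" where
  "Rplus = {vec3 2 0 0, vec3 0 2 0, vec3 0 0 2}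
     \<union> {vec3 tau (s * inverse tau) t | s t. s \<in> {-1,1} \<and> t \<in> {-1,1}}
     \<union> {vec3 s tau (t * inverse tau) | s t. s \<in> {-1,1} \<and> t \<in> {-1,1}}
     \<union> {vec3 (inverse tau) s tau | s. s \<in> {-1,1}}
     \<union> {vec3 (- inverse tau) 1 tau, vec3 (inverse tau) 1 (- tau)}"

definition Ico :: "(real^3) set" where
  "Ico = {vec3 0 (s * tau) t | s t. s \<in> {-1,1} \<and> t \<in> {-1,1}}
     \<union> {vec3 s 0 (t * tau) | s t. s \<in> {-1,1} \<and> t \<in> {-1,1}}
     \<union> {vec3 (s * tau) t 0 | s t. s \<in> {-1,1} \<and> t \<in> {-1,1}}"

definition partial :: "3 \<Rightarrow> (real^3 \<Rightarrow> real) \<Rightarrow> real^3 \<Rightarrow> real" where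
  "partial i f x = deriv (\<lambda>t. f (x + t *\<^sub>R axis i 1)) 0"

text \<open>Divided difference (f(x) - f(x sigma_v)) / <x,v>, extended continuously
  to the hyperplane <x,v> = 0 (it is a polynomial when f is).\<close>
definition divdiff :: "real^3 \<Rightarrow> (real^3 \<Rightarrow> real) \<Rightarrow> real^3 \<Rightarrow> real" where
  "divdiff v f x =
     (if x \<bullet> v \<noteq> 0 then (f x - f (refl v x)) / (x \<bullet> v)
      else Lim (at x within {y. y \<bullet> v \<noteq> 0}) (\<lambda>y. (f y - f (refl v y)) / (y \<bullet> v)))"

definition dunkl :: "real \<Rightarrow> 3 \<Rightarrow> (real^3 \<Rightarrow> real) \<Rightarrow> real^3 \<Rightarrow> real" where
  "dunkl \<kappa> i f x = partial i f x + \<kappa> * (\<Sum>v\<in>Rplus. divdiff v f x * v $ i)"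

text \<open>Polynomials in x in R^3 are given by coefficient functions on exponent
  triples (a,b,c), with finite support.\<close>
definition mono_eval :: "nat \<times> nat \<times> nat \<Rightarrow> real^3 \<Rightarrow> real" where
  "mono_eval \<alpha> y = (case \<alpha> of (a,b,c) \<Rightarrow> (y$1)^a * (y$2)^b * (y$3)^c)"

definition mdeg :: "nat \<times> nat \<times> nat \<Rightarrow> nat" where
  "mdeg \<alpha> = (case \<alpha> of (a,b,c) \<Rightarrow> a + b + c)"

definition poly_eval :: "(nat \<times> nat \<times> nat \<Rightarrow> real) \<Rightarrow> real^3 \<Rightarrow> real" where
  "poly_eval p y = (\<Sum>\<alpha>\<in>{\<alpha>. p \<alpha> \<noteq> 0}. p \<alpha> * mono_eval \<alpha> y)"

definition homogeneous :: "(nat \<times> nat \<times> nat \<Rightarrow> real) \<Rightarrow> nat \<Rightarrow> bool" where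
  "homogeneous p n \<longleftrightarrow> (\<forall>\<alpha>. p \<alpha> \<noteq> 0 \<longrightarrow> mdeg \<alpha> = n)"

definition pairing :: "real \<Rightarrow> real \<Rightarrow> (nat \<times> nat \<times> nat \<Rightarrow> real) \<Rightarrow> (real^3 \<Rightarrow> real) \<Rightarrow> real" where
  "pairing \<kappa> \<omega> p q = (\<Sum>\<alpha>\<in>{\<alpha>. p \<alpha> \<noteq> 0}. case \<alpha> of (a,b,c) \<Rightarrow>
      p \<alpha> * (1 / (2 * \<omega>)) ^ (a + b + c) *
      ((dunkl \<kappa> 1 ^^ a) ((dunkl \<kappa> 2 ^^ b) ((dunkl \<kappa> 3 ^^ c) q))) 0)"

text \<open>Formal binomial series of (1 - a r)^(-k) in the variable r.\<close>
definition negpow_fps :: "real \<Rightarrow> real \<Rightarrow> real fps" where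
  "negpow_fps k a = Abs_fps (\<lambda>m. pochhammer k m / fact m * a ^ m)"

definition qn :: "real \<Rightarrow> real^3 \<Rightarrow> nat \<Rightarrow> real^3 \<Rightarrow> real" where
  "qn \<kappa> y0 n x = fps_nth (inverse (1 - fps_const (x \<bullet> y0) * fps_X)
       * (\<Prod>y\<in>Ico. negpow_fps \<kappa> (x \<bullet> y))) n"

definition nu :: "real \<Rightarrow> nat \<Rightarrow> real" where
  "nu \<kappa> n = 2 ^ n * pochhammer (6 * \<kappa> + 1) (n div 2) * pochhammer (5 * \<kappa> + 1/2) ((n + 1) div 2)"

end

theory Submission
  imports Defs
begin


lemma tau_pos: "tau > 0" unfolding tau_def by (simp add: add_pos_nonneg)
lemma tau_sq: "tau * tau = tau + 1"
proof -
  have "sqrt 5 * sqrt 5 = (5::real)" by simp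
  then show ?thesis unfolding tau_def by (simp add: field_simps algebra_simps)
qed
lemma tau_inv: "inverse tau = tau - 1"
  using tau_sq tau_pos by (simp add: field_simps)

lemma tau_irr: "tau \<notin> \<rat>"
proof
  assume "tau \<in> \<rat>"
  then obtain p q :: int where q: "q > 0" and cp: "coprime p q" and t: "tau = of_int p / of_int q"
    by (elim Rats_cases') 
  have "(of_int p / of_int q) * (of_int p / of_int q) = (of_int p / of_int q :: real) + 1"
    using tau_sq t by simp
  hence "real_of_int (p * p) = of_int (p * q + q * q)" using q by (simp add: field_simps)
  hence e: "p * p = p * q + q * q" by linarith
  hence "q dvd p * p" by (metis dvd_add_right_iff dvd_triv_right mult.commute)
  moreover have "coprime (p*p) q" using cp by simp
  ultimately have "is_unit q" by (meson coprime_common_divisor dvd_refl)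
  hence "q = 1" using q by auto
  with e have "p * p = p + 1" by simp
  hence "p * (p - 1) = 1" by (simp add: algebra_simps)
  hence "p dvd 1" by (metis dvd_def)
  hence "\<bar>p\<bar> = 1" using zdvd1_eq by blast
  hence "p = 1 \<or> p = -1" by auto
  with \<open>p * p = p + 1\<close> show False by auto
qed

type_synonym zt = "rat \<times> rat"
type_synonym zv = "zt \<times> zt \<times> zt"

fun zval :: "zt \<Rightarrow> real" where "zval (a,b) = of_rat a + of_rat b * tau"
fun zadd :: "zt \<Rightarrow> zt \<Rightarrow> zt" where "zadd (a,b) (c,d) = (a+c, b+d)"
fun zmul :: "zt \<Rightarrow> zt \<Rightarrow> zt" where "zmul (a,b) (c,d) = (a*c + b*d, a*d + b*c + b*d)"
fun zneg :: "zt \<Rightarrow> zt" where "zneg (a,b) = (-a,-b)"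
fun zhalf :: "zt \<Rightarrow> zt" where "zhalf (a,b) = (a/2,b/2)"

lemma zval_add: "zval (zadd x y) = zval x + zval y"
  by (cases x; cases y) (simp add: of_rat_add algebra_simps)
lemma zval_mul: "zval (zmul x y) = zval x * zval y"
proof (cases x; cases y)
  fix a b c d assume xy: "x = (a,b)" "y = (c,d)"
  have "zval (zmul (a,b) (c,d)) = of_rat a * of_rat c + of_rat b * of_rat d + (of_rat a * of_rat d + of_rat b * of_rat c + of_rat b * of_rat d) * tau"
    by (simp add: of_rat_add of_rat_mult)
  also have "\<dots> = (of_rat a + of_rat b * tau) * (of_rat c + of_rat d * tau)"
    using tau_sq by algebra
  finally show ?thesis using xy by simp
qed
lemma zval_neg: "zval (zneg x) = - zval x"
  by (cases x) (simp add: of_rat_minus)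
lemma zval_half: "zval (zhalf x) = zval x / 2"
  by (cases x) (simp add: of_rat_divide field_simps)

lemma zval_inj: "zval x = zval y \<longleftrightarrow> x = y"
proof (cases x; cases y)
  fix a b c d assume xy: "x = (a,b)" "y = (c,d)"
  show ?thesis
  proof
    assume e: "zval x = zval y"
    show "x = y"
    proof (cases "b = d")
      case True then show ?thesis using e xy by (simp add: of_rat_eq_iff)
    next
      case False
      have e': "of_rat a + of_rat b * tau = of_rat c + of_rat d * tau" using e xy by simp
      have "(of_rat b - of_rat d) * tau = of_rat c - of_rat a" using e'
        by (simp add: left_diff_distrib; linarith)
      moreover have "of_rat b - of_rat d \<noteq> (0::real)" using False by (simp add: of_rat_eq_iff)
      ultimately have "tau = (of_rat c - of_rat a) / (of_rat b - of_rat d)"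
        by (simp add: eq_divide_eq mult.commute)
      hence "tau = of_rat ((c - a) / (b - d))" by (simp add: of_rat_divide of_rat_diff)
      hence "tau \<in> \<rat>" by (metis Rats_of_rat)
      with tau_irr show ?thesis by simp
    qed
  qed simp
qed

fun vz :: "zv \<Rightarrow> real^3" where "vz (p,q,r) = vec3 (zval p) (zval q) (zval r)"
fun zdot :: "zv \<Rightarrow> zv \<Rightarrow> zt" where
  "zdot (p1,p2,p3) (q1,q2,q3) = zadd (zmul p1 q1) (zadd (zmul p2 q2) (zmul p3 q3))"
fun zsc :: "zt \<Rightarrow> zv \<Rightarrow> zv" where "zsc c (p,q,r) = (zmul c p, zmul c q, zmul c r)"
fun zsubv :: "zv \<Rightarrow> zv \<Rightarrow> zv" where
  "zsubv (p1,p2,p3) (q1,q2,q3) = (zadd p1 (zneg q1), zadd p2 (zneg q2), zadd p3 (zneg q3))"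
fun znegv :: "zv \<Rightarrow> zv" where "znegv (p,q,r) = (zneg p, zneg q, zneg r)"
definition zrefl :: "zv \<Rightarrow> zv \<Rightarrow> zv" where "zrefl v y = zsubv y (zsc (zhalf (zdot y v)) v)"

lemma vec3_nth [simp]: "vec3 a b c $ 1 = a" "vec3 a b c $ 2 = b" "vec3 a b c $ 3 = c"
  unfolding vec3_def by simp_all
lemma vec3_inner: "vec3 a b c \<bullet> vec3 d e f = a*d + b*e + c*f"
  unfolding inner_vec_def sum_3 by simp
lemma vec3_eq: "vec3 a b c = vec3 d e f \<longleftrightarrow> a = d \<and> b = e \<and> c = f"
proof
  assume h: "vec3 a b c = vec3 d e f"
  have "vec3 a b c $ 1 = vec3 d e f $ 1" "vec3 a b c $ 2 = vec3 d e f $ 2" "vec3 a b c $ 3 = vec3 d e f $ 3"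
    using h by simp_all
  then show "a = d \<and> b = e \<and> c = f" by simp
qed simp
lemma vec_eq3: "(x::real^3) = y \<longleftrightarrow> x$1 = y$1 \<and> x$2 = y$2 \<and> x$3 = y$3"
  by (simp add: vec_eq_iff forall_3)
lemma vec3_minus: "vec3 a b c - vec3 d e f = vec3 (a-d) (b-e) (c-f)"
  by (simp add: vec_eq3)
lemma vec3_uminus: "- vec3 a b c = vec3 (-a) (-b) (-c)"
  by (simp add: vec_eq3)
lemma vec3_scale: "k *\<^sub>R vec3 a b c = vec3 (k*a) (k*b) (k*c)"
  by (simp add: vec_eq3)

lemma vz_inj: "vz x = vz y \<longleftrightarrow> x = y"
  by (cases x; cases y) (simp add: vec3_eq zval_inj del: zval.simps)

lemma vz_dot: "vz x \<bullet> vz y = zval (zdot x y)"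
  by (cases x; cases y) (simp only: vz.simps zdot.simps vec3_inner zval_add zval_mul)
lemma vz_neg: "vz (znegv x) = - vz x"
  by (cases x) (simp only: vz.simps znegv.simps vec3_uminus zval_neg)

lemma vz_refl: assumes "zdot v v = (4,0)" shows "refl (vz v) (vz y) = vz (zrefl v y)"
proof -
  have vv: "vz v \<bullet> vz v = 4" using assms by (simp add: vz_dot)
  obtain v1 v2 v3 where v: "v = (v1,v2,v3)" by (cases v) auto
  obtain y1 y2 y3 where y: "y = (y1,y2,y3)" by (cases y) auto
  show ?thesis unfolding refl_def vv zrefl_def
    by (simp add: v y vec3_minus vec3_scale zval_add zval_mul zval_neg zval_half
         vz_dot[symmetric] vec3_inner vec3_eq del: zval.simps)
qed

definition Il :: "zv list" where
  "Il = [((0,0),(0,-1),(-1,0)), ((0,0),(0,-1),(1,0)), ((0,0),(0,1),(-1,0)), ((0,0),(0,1),(1,0)), ((-1,0),(0,0),(0,-1)), ((-1,0),(0,0),(0,1)), ((1,0),(0,0),(0,-1)), ((1,0),(0,0),(0,1)), ((0,-1),(-1,0),(0,0)), ((0,-1),(1,0),(0,0)), ((0,1),(-1,0),(0,0)), ((0,1),(1,0),(0,0))]"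

definition Rl :: "zv list" where
  "Rl = [((2,0),(0,0),(0,0)), ((0,0),(2,0),(0,0)), ((0,0),(0,0),(2,0)), ((0,1),(1,-1),(-1,0)), ((0,1),(1,-1),(1,0)), ((0,1),(-1,1),(-1,0)), ((0,1),(-1,1),(1,0)), ((-1,0),(0,1),(1,-1)), ((-1,0),(0,1),(-1,1)), ((1,0),(0,1),(1,-1)), ((1,0),(0,1),(-1,1)), ((-1,1),(-1,0),(0,1)), ((-1,1),(1,0),(0,1)), ((1,-1),(1,0),(0,1)), ((-1,1),(1,0),(0,-1))]"

lemma pm_set2: "{f s t | s t. s \<in> {-1,1::real} \<and> t \<in> {-1,1::real}} = {f (-1) (-1), f (-1) 1, f 1 (-1), f 1 1}"
  by auto
lemma pm_set1: "{f s | s. s \<in> {-1,1::real}} = {f (-1), f 1}"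
  by auto

lemma Ico_elems:
  "vec3 0 ((- 1) * tau) (- 1) = vz ((0,0),(0,-1),(-1,0))"
  "vec3 0 ((- 1) * tau) 1 = vz ((0,0),(0,-1),(1,0))"
  "vec3 0 (1 * tau) (- 1) = vz ((0,0),(0,1),(-1,0))"
  "vec3 0 (1 * tau) 1 = vz ((0,0),(0,1),(1,0))"
  "vec3 (- 1) 0 ((- 1) * tau) = vz ((-1,0),(0,0),(0,-1))"
  "vec3 (- 1) 0 (1 * tau) = vz ((-1,0),(0,0),(0,1))"
  "vec3 1 0 ((- 1) * tau) = vz ((1,0),(0,0),(0,-1))"
  "vec3 1 0 (1 * tau) = vz ((1,0),(0,0),(0,1))"
  "vec3 ((- 1) * tau) (- 1) 0 = vz ((0,-1),(-1,0),(0,0))"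
  "vec3 ((- 1) * tau) 1 0 = vz ((0,-1),(1,0),(0,0))"
  "vec3 (1 * tau) (- 1) 0 = vz ((0,1),(-1,0),(0,0))"
  "vec3 (1 * tau) 1 0 = vz ((0,1),(1,0),(0,0))"
  by (simp_all add: tau_inv)

lemma Rplus_elems:
  "vec3 2 0 0 = vz ((2,0),(0,0),(0,0))"
  "vec3 0 2 0 = vz ((0,0),(2,0),(0,0))"
  "vec3 0 0 2 = vz ((0,0),(0,0),(2,0))"
  "vec3 tau ((- 1) * inverse tau) (- 1) = vz ((0,1),(1,-1),(-1,0))"
  "vec3 tau ((- 1) * inverse tau) 1 = vz ((0,1),(1,-1),(1,0))"
  "vec3 tau (1 * inverse tau) (- 1) = vz ((0,1),(-1,1),(-1,0))"
  "vec3 tau (1 * inverse tau) 1 = vz ((0,1),(-1,1),(1,0))"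
  "vec3 (- 1) tau ((- 1) * inverse tau) = vz ((-1,0),(0,1),(1,-1))"
  "vec3 (- 1) tau (1 * inverse tau) = vz ((-1,0),(0,1),(-1,1))"
  "vec3 1 tau ((- 1) * inverse tau) = vz ((1,0),(0,1),(1,-1))"
  "vec3 1 tau (1 * inverse tau) = vz ((1,0),(0,1),(-1,1))"
  "vec3 (inverse tau) (- 1) tau = vz ((-1,1),(-1,0),(0,1))"
  "vec3 (inverse tau) 1 tau = vz ((-1,1),(1,0),(0,1))"
  "vec3 (- inverse tau) 1 tau = vz ((1,-1),(1,0),(0,1))"
  "vec3 (inverse tau) 1 (- tau) = vz ((-1,1),(1,0),(0,-1))"
  by (simp_all add: tau_inv)

lemma Ico_list: "Ico = vz ` set Il"
  unfolding Ico_def pm_set2 Il_def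
  by (simp only: Ico_elems list.set image_insert image_empty Un_insert_left Un_empty_left)

lemma Rplus_list: "Rplus = vz ` set Rl"
  unfolding Rplus_def pm_set2 pm_set1 Rl_def
  by (simp only: Rplus_elems list.set image_insert image_empty Un_insert_left Un_empty_left)

lemma Rl_norm: "\<forall>r\<in>set Rl. zdot r r = (4,0)" by (simp add: Rl_def)
lemma Il_refl_closed: "\<forall>r\<in>set Rl. \<forall>y\<in>set Il. zrefl r y \<in> set Il"
  by (simp add: Rl_def Il_def zrefl_def)
lemma Il_neg: "\<forall>y\<in>set Il. znegv y \<in> set Il \<and> znegv y \<noteq> y"
  by (simp add: Il_def)
lemma Il_distinct: "distinct Il" by (simp add: Il_def)
lemma Rl_distinct: "distinct Rl" by (simp add: Rl_def)
lemma Il_orbit: "\<forall>y0\<in>set Il. distinct (filter (\<lambda>z. z \<noteq> y0) (map (\<lambda>r. zrefl r y0) Rl))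
   \<and> (\<forall>z\<in>set (filter (\<lambda>z. z \<noteq> y0) (map (\<lambda>r. zrefl r y0) Rl)). z \<noteq> znegv y0)
   \<and> length (filter (\<lambda>z. z \<noteq> y0) (map (\<lambda>r. zrefl r y0) Rl)) = 10"
  by (simp add: Rl_def Il_def zrefl_def)

lemma vz_inj_on: "inj_on vz A" by (simp add: inj_on_def vz_inj)
lemma Ico_finite: "finite Ico" by (simp add: Ico_list)
lemma Rplus_finite: "finite Rplus" by (simp add: Rplus_list)
lemma Ico_card: "card Ico = 12"
  unfolding Ico_list by (simp add: card_image vz_inj_on distinct_card Il_distinct) (simp add: Il_def)

lemma Rplus_norm: assumes "v \<in> Rplus" shows "v \<bullet> v = 4"
proof -
  obtain r where r: "r \<in> set Rl" "v = vz r" using assms by (auto simp: Rplus_list)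
  show ?thesis using Rl_norm r by (simp add: vz_dot)
qed

lemma Rplus_nz: "v \<in> Rplus \<Longrightarrow> v \<bullet> v \<noteq> 0" using Rplus_norm by simp

lemma refl_vz: assumes "r \<in> set Rl" shows "refl (vz r) (vz y) = vz (zrefl r y)"
  using Rl_norm assms by (intro vz_refl) simp

lemma refl_Ico: assumes "v \<in> Rplus" "y \<in> Ico" shows "refl v y \<in> Ico"
proof -
  obtain r where r: "r \<in> set Rl" "v = vz r" using assms by (auto simp: Rplus_list)
  obtain z where z: "z \<in> set Il" "y = vz z" using assms by (auto simp: Ico_list)
  show ?thesis using r z Il_refl_closed refl_vz[OF r(1)] by (auto simp: Ico_list)
qed

lemma neg_Ico: assumes "y \<in> Ico" shows "- y \<in> Ico" "- y \<noteq> y"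
proof -
  obtain z where z: "z \<in> set Il" "y = vz z" using assms by (auto simp: Ico_list)
  show "- y \<in> Ico" using z Il_neg by (auto simp: Ico_list vz_neg[symmetric])
  show "- y \<noteq> y" using z Il_neg by (auto simp: vz_neg[symmetric] vz_inj)
qed

lemma refl_inner: "refl v x \<bullet> y = x \<bullet> refl v y"
  unfolding refl_def by (simp add: inner_diff_left inner_diff_right inner_commute algebra_simps)

lemma refl_refl: assumes "v \<bullet> v \<noteq> 0" shows "refl v (refl v x) = x"
  unfolding refl_def using assms
  by (simp add: inner_diff_left inner_commute algebra_simps field_simps)

lemma refl_bij_Ico: assumes "v \<in> Rplus" shows "bij_betw (refl v) Ico Ico"
proof (rule bij_betw_byWitness[where f' = "refl v"])
  show "\<forall>a\<in>Ico. refl v (refl v a) = a" using refl_refl Rplus_nz assms by blast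
  show "\<forall>a\<in>Ico. refl v (refl v a) = a" using refl_refl Rplus_nz assms by blast
  show "refl v ` Ico \<subseteq> Ico" using refl_Ico assms by blast
  show "refl v ` Ico \<subseteq> Ico" using refl_Ico assms by blast
qed

lemma orbit_sum:
  fixes f :: "real^3 \<Rightarrow> 'a::comm_monoid_add"
  assumes y0: "y0 \<in> Ico" and f0: "f y0 = 0"
  shows "(\<Sum>v\<in>Rplus. f (refl v y0)) = (\<Sum>y\<in>Ico - {- y0}. f y)"
proof -
  obtain y' where y': "y' \<in> set Il" "y0 = vz y'" using y0 by (auto simp: Ico_list)
  define M where "M = map (\<lambda>r. zrefl r y') Rl"
  define L where "L = filter (\<lambda>z. z \<noteq> y') M"
  have Lprops: "distinct L" "\<forall>z\<in>set L. z \<noteq> znegv y'" "length L = 10"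
    using Il_orbit y'(1) unfolding L_def M_def by auto
  have LsubIl: "set L \<subseteq> set Il - {y', znegv y'}"
  proof
    fix z assume zL: "z \<in> set L"
    then have zM: "z \<in> set M" and zy: "z \<noteq> y'" unfolding L_def by simp_all
    from zM obtain r where "r \<in> set Rl" "z = zrefl r y'" unfolding M_def by auto
    then have "z \<in> set Il" using Il_refl_closed y'(1) by blast
    moreover have "z \<noteq> znegv y'" using Lprops(2) zL by blast
    ultimately show "z \<in> set Il - {y', znegv y'}" using zy by blast
  qed
  have negy: "znegv y' \<in> set Il" "znegv y' \<noteq> y'" using Il_neg y'(1) by auto
  have cardB: "card (set Il - {y', znegv y'}) = 10"
    using negy y'(1) Il_distinct by (simp add: card_Diff_subset distinct_card) (simp add: Il_def)
  have setL: "set L = set Il - {y', znegv y'}"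
    using LsubIl cardB Lprops by (intro card_subset_eq) (simp_all add: distinct_card)
  have "(\<Sum>v\<in>Rplus. f (refl v y0)) = (\<Sum>r\<in>set Rl. f (refl (vz r) y0))"
    unfolding Rplus_list by (simp add: sum.reindex vz_inj_on)
  also have "\<dots> = (\<Sum>r\<in>set Rl. f (vz (zrefl r y')))"
    using refl_vz y'(2) by (intro sum.cong) auto
  also have "\<dots> = sum_list (map (\<lambda>r. f (vz (zrefl r y'))) Rl)"
    by (simp add: sum.distinct_set_conv_list Rl_distinct)
  also have "\<dots> = sum_list (map (f \<circ> vz) M)" unfolding M_def by (simp add: comp_def)
  also have "\<dots> = sum_list (map (f \<circ> vz) L)"
    unfolding L_def using f0 y'(2) by (intro sum_list_map_filter[symmetric]) auto
  also have "\<dots> = (\<Sum>z\<in>set L. f (vz z))"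
    using Lprops(1) by (simp add: sum.distinct_set_conv_list comp_def)
  also have "\<dots> = (\<Sum>y\<in>vz ` (set Il - {y', znegv y'}). f y)"
    unfolding setL by (simp add: sum.reindex vz_inj_on)
  also have "vz ` (set Il - {y', znegv y'}) = Ico - {y0, - y0}"
  proof -
    have inj: "\<And>a b. vz a = vz b \<Longrightarrow> a = b" using vz_inj by blast
    show ?thesis unfolding Ico_list y'(2) vz_neg[symmetric] using inj by blast
  qed
  also have "(\<Sum>y\<in>Ico - {y0, - y0}. f y) = (\<Sum>y\<in>Ico - {- y0}. f y)"
  proof -
    have eq: "Ico - {- y0} = insert y0 (Ico - {y0, - y0})" using y0 neg_Ico(2)[OF y0] by auto
    have "(\<Sum>y\<in>Ico - {- y0}. f y) = (\<Sum>y\<in>insert y0 (Ico - {y0, - y0}). f y)"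
      by (subst eq) (rule refl)
    also have "\<dots> = f y0 + (\<Sum>y\<in>Ico - {y0, - y0}. f y)"
      by (rule sum.insert) (use Ico_finite in auto)
    finally show ?thesis using f0 by simp
  qed
  finally show ?thesis .
qed



definition Gf :: "real \<Rightarrow> real fps" where "Gf a = inverse (1 - fps_const a * fps_X)"

lemma one_minus_cX_nth: "fps_nth ((1 - fps_const a * fps_X) * (A::real fps)) n = fps_nth A n - (if n = 0 then 0 else a * fps_nth A (n - 1))"
proof -
  have "(1 - fps_const a * fps_X) * A = A - fps_const a * (fps_X * A)" by (simp add: algebra_simps)
  then show ?thesis by (simp add: fps_mult_left_const_nth)
qed

lemma Gf_nth: "fps_nth (Gf a) n = a ^ n"
proof -
  have "(1 - fps_const a * fps_X) * Abs_fps (\<lambda>n. a ^ n) = 1"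
  proof (rule fps_ext)
    fix n show "fps_nth ((1 - fps_const a * fps_X) * Abs_fps (\<lambda>n. a ^ n)) n = fps_nth (1::real fps) n"
      by (cases n) (simp_all add: one_minus_cX_nth)
  qed
  then have "Gf a = Abs_fps (\<lambda>n. a ^ n)" unfolding Gf_def by (rule fps_inverse_unique)
  then show ?thesis by simp
qed

lemma Gf_rel: "fps_const a * fps_X * Gf a = Gf a - 1"
proof (rule fps_ext)
  fix n show "fps_nth (fps_const a * fps_X * Gf a) n = fps_nth (Gf a - 1) n"
    by (cases n) (simp_all add: Gf_nth mult.assoc fps_mult_left_const_nth)
qed

lemma Gf_rel': "Gf a * (1 - fps_const a * fps_X) = 1"
  using Gf_rel[of a] by (simp add: algebra_simps)

lemma Gf_diff: "Gf a - Gf b = fps_const (a - b) * fps_X * Gf a * Gf b"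
proof -
  have 1: "fps_const a * fps_X * Gf a = Gf a - 1" by (rule Gf_rel)
  have 2: "fps_const b * fps_X * Gf b = Gf b - 1" by (rule Gf_rel)
  have 3: "fps_const (a - b) = fps_const a - (fps_const b :: real fps)" by simp
  show ?thesis unfolding 3 using 1 2 by algebra
qed

lemma Gf_deriv: "fps_deriv (Gf a) = fps_const a * Gf a * Gf a"
  unfolding Gf_def by (subst fps_inverse_deriv) (simp_all add: power2_eq_square)

lemma negpow_nth: "fps_nth (negpow_fps k a) m = pochhammer k m / fact m * a ^ m"
  unfolding negpow_fps_def by simp

lemma negpow_aux:
  fixes P F A a k j :: real
  assumes "F > 0" "j \<ge> 0"
  shows "(k + (j+1)) * P / ((j+1) * F) * (a * A) - a * (P / F * A) = k * (P / ((j+1) * F) * (a * A))"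
proof -
  have Fj: "F * j \<ge> 0" using assms by simp
  have "F + F * j > 0" using assms Fj by linarith
  moreover have "(j+1) * F > 0" using assms by simp
  moreover have "F * (F + F * j) > 0" using assms \<open>F + F * j > 0\<close> by simp
  ultimately have "j + 1 \<noteq> 0" "F \<noteq> 0" "F + F * j \<noteq> 0" "(j+1) * F \<noteq> 0"
    "F * F + F * (F * j) \<noteq> 0" using assms by (auto simp: algebra_simps)
  then show ?thesis by (simp add: field_simps)
qed

lemma negpow_deriv_nth: "fps_nth (fps_deriv (negpow_fps k a)) m = pochhammer k (Suc m) / fact m * a ^ Suc m"
proof -
  have "fact (Suc m) = of_nat (Suc m) * (fact m :: real)" by simp
  then show ?thesis unfolding fps_deriv_nth negpow_nth by (simp add: field_simps del: of_nat_Suc)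
qed

lemma Gf_sq_nth: "fps_nth (Gf a * Gf a) n = of_nat (Suc n) * a ^ n"
proof -
  have "fps_nth (Gf a * Gf a) n = (\<Sum>i=0..n. a ^ n)"
    unfolding fps_mult_nth Gf_nth by (intro sum.cong) (simp_all add: power_add[symmetric])
  then show ?thesis by simp
qed

definition Mf :: "real \<Rightarrow> real \<Rightarrow> real fps" where
  "Mf k a = Abs_fps (\<lambda>j. pochhammer k (Suc j) / fact j * a ^ j)"

lemma Mf_eq: "Mf k a = fps_const k * Gf a * negpow_fps k a"
proof -
  have H: "(1 - fps_const a * fps_X) * Mf k a = fps_const k * negpow_fps k a"
  proof (rule fps_ext)
    fix m
    show "fps_nth ((1 - fps_const a * fps_X) * Mf k a) m = fps_nth (fps_const k * negpow_fps k a) m"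
    proof (cases m)
      case 0 then show ?thesis by (simp add: one_minus_cX_nth negpow_nth Mf_def fps_mult_left_const_nth)
    next
      case (Suc j)
      have p: "pochhammer k (Suc (Suc j)) = (k + (of_nat j + 1)) * pochhammer k (Suc j)"
        by (simp add: pochhammer_rec' add.commute)
      have f: "fact (Suc j) = (of_nat j + 1) * (fact j :: real)" by simp
      have "pochhammer k (Suc (Suc j)) / fact (Suc j) * a ^ Suc j - a * (pochhammer k (Suc j) / fact j * a ^ j)
          = k * (pochhammer k (Suc j) / fact (Suc j) * a ^ Suc j)"
        unfolding p f power_Suc[of a j] by (rule negpow_aux) simp_all
      then show ?thesis using Suc
        by (simp add: one_minus_cX_nth negpow_nth Mf_def fps_mult_left_const_nth del: power_Suc)
    qed
  qed
  have "Mf k a = (Gf a * (1 - fps_const a * fps_X)) * Mf k a"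
    by (simp only: Gf_rel' mult_1_left)
  also have "\<dots> = Gf a * (fps_const k * negpow_fps k a)" by (simp only: mult.assoc H)
  also have "\<dots> = fps_const k * Gf a * negpow_fps k a" by (simp only: ac_simps)
  finally show ?thesis .
qed

lemma negpow_deriv2: "fps_deriv (negpow_fps k a) = fps_const a * Mf k a"
proof (rule fps_ext)
  fix n show "fps_nth (fps_deriv (negpow_fps k a)) n = fps_nth (fps_const a * Mf k a) n"
    unfolding negpow_deriv_nth by (simp add: Mf_def)
qed

lemma negpow_deriv: "fps_deriv (negpow_fps k a) = fps_const (k * a) * Gf a * negpow_fps k a"
  unfolding negpow_deriv2 Mf_eq by (simp only: fps_const_mult[symmetric] ac_simps)

definition hasd :: "(real \<Rightarrow> real fps) \<Rightarrow> real fps \<Rightarrow> bool" where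
  "hasd A A' \<longleftrightarrow> (\<forall>n. ((\<lambda>t. fps_nth (A t) n) has_field_derivative fps_nth A' n) (at 0))"

lemma hasd_mult:
  assumes "hasd A A'" "hasd B B'"
  shows "hasd (\<lambda>t. A t * B t) (A' * B 0 + A 0 * B')"
  unfolding hasd_def
proof
  fix n
  have "((\<lambda>t. \<Sum>i=0..n. fps_nth (A t) i * fps_nth (B t) (n - i)) has_field_derivative
      (\<Sum>i=0..n. fps_nth (A 0) i * fps_nth B' (n - i) + fps_nth A' i * fps_nth (B 0) (n - i))) (at 0)"
    using assms unfolding hasd_def by (intro DERIV_sum DERIV_mult') auto
  then show "((\<lambda>t. fps_nth (A t * B t) n) has_field_derivative fps_nth (A' * B 0 + A 0 * B') n) (at 0)"
    by (simp add: fps_mult_nth sum.distrib add.commute)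
qed

lemma hasd_const: "hasd (\<lambda>t. C) 0"
  unfolding hasd_def by simp

lemma hasd_cong: "hasd A D \<Longrightarrow> D = E \<Longrightarrow> hasd A E" by simp

lemma hasd_prod:
  assumes "finite S" "\<forall>y\<in>S. hasd (f y) (f y 0 * g y)"
  shows "hasd (\<lambda>t. \<Prod>y\<in>S. f y t) ((\<Prod>y\<in>S. f y 0) * (\<Sum>y\<in>S. g y))"
  using assms
proof (induction S rule: finite_induct)
  case empty then show ?case using hasd_const[of 1] by simp
next
  case (insert x F)
  have "hasd (\<lambda>t. f x t * (\<Prod>y\<in>F. f y t))
     (f x 0 * g x * (\<Prod>y\<in>F. f y 0) + f x 0 * ((\<Prod>y\<in>F. f y 0) * (\<Sum>y\<in>F. g y)))"
    using insert by (intro hasd_mult) auto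
  then show ?case using insert
    by (simp add: distrib_left distrib_right ac_simps)
qed

lemma lin_pow_deriv:
  "((\<lambda>t. (a + t * d) ^ n) has_field_derivative (of_nat n * (d * a ^ (n - 1)))) (at 0)"
proof -
  have h: "((\<lambda>t. a + t * d) has_field_derivative d) (at 0)"
    by (auto intro!: derivative_eq_intros)
  show ?thesis using DERIV_power[OF h, of n] by simp
qed

lemma hasd_Gf: "hasd (\<lambda>t. Gf (a + t * d)) (fps_const d * fps_X * Gf a * Gf a)"
  unfolding hasd_def
proof
  fix n
  show "((\<lambda>t. fps_nth (Gf (a + t * d)) n) has_field_derivative fps_nth (fps_const d * fps_X * Gf a * Gf a) n) (at 0)"
  proof (cases n)
    case 0 then show ?thesis by (simp add: Gf_nth mult.assoc fps_mult_left_const_nth)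
  next
    case (Suc j)
    have "fps_nth (fps_const d * fps_X * Gf a * Gf a) n = of_nat n * (d * a ^ (n - 1))"
      using Suc by (simp add: mult.assoc fps_mult_left_const_nth Gf_sq_nth del: of_nat_Suc)
    then show ?thesis unfolding Gf_nth using lin_pow_deriv[of a d n] by simp
  qed
qed

lemma hasd_negpow: "hasd (\<lambda>t. negpow_fps k (a + t * d)) (negpow_fps k a * (fps_const (k * d) * fps_X * Gf a))"
  unfolding hasd_def
proof
  fix n
  have e: "negpow_fps k a * (fps_const (k * d) * fps_X * Gf a) = fps_const d * fps_X * Mf k a"
    unfolding Mf_eq by (simp only: fps_const_mult[symmetric] ac_simps)
  have "fps_nth (fps_const d * fps_X * Mf k a) n = pochhammer k n / fact n * (of_nat n * (d * a ^ (n - 1)))"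
  proof (cases n)
    case 0 then show ?thesis by (simp add: mult.assoc fps_mult_left_const_nth)
  next
    case (Suc j)
    have f: "fact (Suc j) = (of_nat j + 1) * (fact j :: real)" by simp
    have "(of_nat j + 1) * fact j \<noteq> (0::real)" by (simp add: add_pos_nonneg)
    then show ?thesis unfolding Suc f
      by (simp add: mult.assoc fps_mult_left_const_nth Mf_def field_simps del: of_nat_Suc fact_Suc)
        (simp add: of_nat_Suc algebra_simps)
  qed
  then show "((\<lambda>t. fps_nth (negpow_fps k (a + t * d)) n) has_field_derivative
      fps_nth (negpow_fps k a * (fps_const (k * d) * fps_X * Gf a)) n) (at 0)"
    unfolding e negpow_nth using DERIV_cmult[OF lin_pow_deriv[of a d n], of "pochhammer k n / fact n"] by simp
qed

definition tw :: "real fps \<Rightarrow> real fps" where "tw F = Abs_fps (\<lambda>n. (-1) ^ n * fps_nth F n)"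

lemma tw_nth: "fps_nth (tw F) n = (-1) ^ n * fps_nth F n" unfolding tw_def by simp

lemma tw_mult: "tw (F * G) = tw F * tw G"
proof (rule fps_ext)
  fix n
  have "fps_nth (tw (F * G)) n = (\<Sum>i=0..n. ((-1) ^ i * fps_nth F i) * ((-1) ^ (n - i) * fps_nth G (n - i)))"
    unfolding tw_nth fps_mult_nth sum_distrib_left
  proof (intro sum.cong refl)
    fix i assume "i \<in> {0..n}"
    then have "(-1::real) ^ n = (-1) ^ i * (-1) ^ (n - i)" by (simp add: power_add[symmetric])
    then show "(-1) ^ n * (fps_nth F i * fps_nth G (n - i)) = (-1) ^ i * fps_nth F i * ((-1) ^ (n - i) * fps_nth G (n - i))"
      by simp
  qed
  then show "fps_nth (tw (F * G)) n = fps_nth (tw F * tw G) n" by (simp add: fps_mult_nth tw_nth)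
qed

lemma tw_one: "tw 1 = 1" by (rule fps_ext) (simp add: tw_nth)

lemma tw_prod: "finite S \<Longrightarrow> tw (\<Prod>y\<in>S. f y) = (\<Prod>y\<in>S. tw (f y))"
  by (induction S rule: finite_induct) (simp_all add: tw_one tw_mult)

lemma tw_Gf: "tw (Gf a) = Gf (- a)"
  by (rule fps_ext) (simp add: tw_nth Gf_nth power_minus[of a])

lemma tw_negpow: "tw (negpow_fps k a) = negpow_fps k (- a)"
  by (rule fps_ext) (simp add: tw_nth negpow_nth power_minus[of a])

definition hasc :: "(real^3 \<Rightarrow> real fps) \<Rightarrow> bool" where
  "hasc A \<longleftrightarrow> (\<forall>n. continuous_on UNIV (\<lambda>y. fps_nth (A y) n))"

lemma hasc_mult: "hasc A \<Longrightarrow> hasc B \<Longrightarrow> hasc (\<lambda>y. A y * B y)"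
  unfolding hasc_def fps_mult_nth by (auto intro!: continuous_intros)

lemma hasc_const: "hasc (\<lambda>y. C)"
  unfolding hasc_def by simp

lemma hasc_prod: "finite S \<Longrightarrow> \<forall>z\<in>S. hasc (f z) \<Longrightarrow> hasc (\<lambda>y. \<Prod>z\<in>S. f z y)"
proof (induction S rule: finite_induct)
  case empty then show ?case using hasc_const[of 1] by simp
next
  case (insert x F) then show ?case using hasc_mult[of "f x" "\<lambda>y. \<Prod>z\<in>F. f z y"] by simp
qed

lemma hasc_Gf: "hasc (\<lambda>y. Gf (y \<bullet> z))"
  unfolding hasc_def Gf_nth by (auto intro!: continuous_intros)

lemma hasc_negpow: "hasc (\<lambda>y. negpow_fps k (y \<bullet> z))"
  unfolding hasc_def negpow_nth by (auto intro!: continuous_intros)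

lemma key_alg:
  fixes X G Gm P A K S1 S2 k yi ca :: "real fps"
  assumes "ca * X * G = G - 1" "- ca * X * Gm = Gm - 1" "X * K = A - 12" "S1 + S2 = yi * (A - 2 * Gm)"
  shows "yi * X * G * G * P + G * P * (k * X * S1) + k * (X * G * P * S2) =
         yi * X * (G * P + X * (ca * G * G * P + G * (k * P * K)) + 11 * k * G * P - k * Gm * P)"
  using assms by algebra



lemma fps_deriv_prod:
  assumes "finite S" "\<forall>y\<in>S. fps_deriv (f y) = f y * g y"
  shows "fps_deriv (\<Prod>y\<in>S. f y) = (\<Prod>y\<in>S. f y) * (\<Sum>y\<in>S. g y)"
  using assms
proof (induction S rule: finite_induct)
  case empty then show ?case by simp
next
  case (insert x F)
  then show ?case by (simp add: algebra_simps)
qed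

lemma fps_prod_nth0: "finite S \<Longrightarrow> fps_nth (\<Prod>y\<in>S. f y) 0 = (\<Prod>y\<in>S. fps_nth (f y) 0)"
  by (induction S rule: finite_induct) simp_all

definition Pf :: "real \<Rightarrow> real^3 \<Rightarrow> real fps" where
  "Pf k x = (\<Prod>y\<in>Ico. negpow_fps k (x \<bullet> y))"

lemma qn_eq: "qn k y0 n x = fps_nth (Gf (x \<bullet> y0) * Pf k x) n"
  unfolding qn_def Gf_def Pf_def by simp

lemma qn_0: "qn k y0 0 x = 1"
  unfolding qn_eq Pf_def using Ico_finite by (simp add: fps_prod_nth0 Gf_nth negpow_nth)

lemma Pf_refl: assumes "v \<in> Rplus" shows "Pf k (refl v x) = Pf k x"
proof -
  have "Pf k (refl v x) = (\<Prod>y\<in>Ico. negpow_fps k (x \<bullet> refl v y))"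
    unfolding Pf_def refl_inner by simp
  also have "\<dots> = Pf k x" unfolding Pf_def
    by (rule prod.reindex_bij_betw[OF refl_bij_Ico[OF assms], of "\<lambda>y. negpow_fps k (x \<bullet> y)"])
  finally show ?thesis .
qed

lemma neg_bij_Ico: "bij_betw uminus Ico Ico"
proof (rule bij_betw_byWitness[where f' = uminus])
  show "\<forall>a\<in>Ico. - (- a) = a" by simp
  show "\<forall>a\<in>Ico. - (- a) = a" by simp
  show "uminus ` Ico \<subseteq> Ico" using neg_Ico by blast
  show "uminus ` Ico \<subseteq> Ico" using neg_Ico by blast
qed

lemma Pf_tw: "tw (Pf k x) = Pf k x"
proof -
  have "tw (Pf k x) = (\<Prod>y\<in>Ico. negpow_fps k (x \<bullet> (- y)))"
    unfolding Pf_def using Ico_finite by (simp add: tw_prod tw_negpow)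
  also have "\<dots> = Pf k x" unfolding Pf_def
    by (rule prod.reindex_bij_betw[OF neg_bij_Ico, of "\<lambda>y. negpow_fps k (x \<bullet> y)"])
  finally show ?thesis .
qed

lemma qn_sign: "fps_nth (Gf (- (x \<bullet> y0)) * Pf k x) m = (-1) ^ m * qn k y0 m x"
proof -
  have "Gf (- (x \<bullet> y0)) * Pf k x = tw (Gf (x \<bullet> y0) * Pf k x)"
    by (simp add: tw_mult tw_Gf Pf_tw)
  then show ?thesis by (simp add: tw_nth qn_eq)
qed

lemma inner_line: "(x + t *\<^sub>R axis i 1) \<bullet> z = x \<bullet> z + t * z $ i"
  by (simp add: inner_add_left inner_axis')

lemma partial_qn:
  "partial i (\<lambda>x. c * qn k y0 n x) x =
   c * fps_nth (fps_const (y0 $ i) * fps_X * Gf (x \<bullet> y0) * Gf (x \<bullet> y0) * Pf k x +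
       Gf (x \<bullet> y0) * (Pf k x * (\<Sum>y\<in>Ico. fps_const (k * y $ i) * fps_X * Gf (x \<bullet> y)))) n"
proof -
  define A where "A = (\<lambda>t. Gf (x \<bullet> y0 + t * y0 $ i))"
  define B where "B = (\<lambda>t. \<Prod>y\<in>Ico. negpow_fps k (x \<bullet> y + t * y $ i))"
  have hA: "hasd A (fps_const (y0 $ i) * fps_X * Gf (x \<bullet> y0) * Gf (x \<bullet> y0))"
    unfolding A_def by (rule hasd_Gf)
  have hB: "hasd B ((\<Prod>y\<in>Ico. (\<lambda>y t. negpow_fps k (x \<bullet> y + t * y $ i)) y 0) *
       (\<Sum>y\<in>Ico. fps_const (k * y $ i) * fps_X * Gf (x \<bullet> y)))"
    unfolding B_def
  proof (rule hasd_prod[OF Ico_finite])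
    show "\<forall>y\<in>Ico. hasd (\<lambda>t. negpow_fps k (x \<bullet> y + t * y $ i))
        ((\<lambda>t. negpow_fps k (x \<bullet> y + t * y $ i)) 0 * (fps_const (k * y $ i) * fps_X * Gf (x \<bullet> y)))"
      using hasd_negpow by simp
  qed
  have B0: "B 0 = Pf k x" unfolding B_def Pf_def by simp
  have A0: "A 0 = Gf (x \<bullet> y0)" unfolding A_def by simp
  have hAB: "hasd (\<lambda>t. A t * B t) (fps_const (y0 $ i) * fps_X * Gf (x \<bullet> y0) * Gf (x \<bullet> y0) * Pf k x +
       Gf (x \<bullet> y0) * (Pf k x * (\<Sum>y\<in>Ico. fps_const (k * y $ i) * fps_X * Gf (x \<bullet> y))))"
    using hasd_mult[OF hA hB] B0 A0 unfolding B_def Pf_def by simp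
  have eq: "(\<lambda>t. c * qn k y0 n (x + t *\<^sub>R axis i 1)) = (\<lambda>t. c * fps_nth (A t * B t) n)"
    unfolding qn_eq A_def B_def Pf_def inner_line by simp
  have "((\<lambda>t. c * fps_nth (A t * B t) n) has_field_derivative
      c * fps_nth (fps_const (y0 $ i) * fps_X * Gf (x \<bullet> y0) * Gf (x \<bullet> y0) * Pf k x +
       Gf (x \<bullet> y0) * (Pf k x * (\<Sum>y\<in>Ico. fps_const (k * y $ i) * fps_X * Gf (x \<bullet> y)))) n) (at 0)"
    using hAB unfolding hasd_def by (intro DERIV_cmult) simp
  then show ?thesis unfolding partial_def eq by (rule DERIV_imp_deriv)
qed

lemma refl_diff: "y0 - refl v y0 = (2 * (y0 \<bullet> v) / (v \<bullet> v)) *\<^sub>R v"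
  unfolding refl_def by simp

lemma qn_diff:
  assumes v: "v \<in> Rplus"
  shows "c * qn k y0 n y - c * qn k y0 n (refl v y) =
    (y \<bullet> v) * (c * fps_nth (fps_const (2 * (y0 \<bullet> v) / (v \<bullet> v)) * fps_X * Gf (y \<bullet> y0) * Gf (y \<bullet> refl v y0) * Pf k y) n)"
proof -
  define cv where "cv = 2 * (y0 \<bullet> v) / (v \<bullet> v)"
  have ab: "y \<bullet> y0 - y \<bullet> refl v y0 = cv * (y \<bullet> v)"
    using refl_diff[of y0 v] unfolding cv_def by (metis inner_diff_right inner_scaleR_right)
  have "qn k y0 n (refl v y) = fps_nth (Gf (y \<bullet> refl v y0) * Pf k y) n"
    unfolding qn_eq Pf_refl[OF v] by (simp add: refl_inner)
  then have "c * qn k y0 n y - c * qn k y0 n (refl v y) = c * fps_nth ((Gf (y \<bullet> y0) - Gf (y \<bullet> refl v y0)) * Pf k y) n"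
    unfolding qn_eq by (simp add: algebra_simps)
  also have "\<dots> = c * fps_nth (fps_const (cv * (y \<bullet> v)) * (fps_X * Gf (y \<bullet> y0) * Gf (y \<bullet> refl v y0) * Pf k y)) n"
    unfolding Gf_diff ab by (simp only: mult.assoc)
  also have "\<dots> = (y \<bullet> v) * (c * fps_nth (fps_const cv * fps_X * Gf (y \<bullet> y0) * Gf (y \<bullet> refl v y0) * Pf k y) n)"
    by (simp only: fps_mult_left_const_nth mult.assoc) (simp only: ac_simps)
  finally show ?thesis unfolding cv_def .
qed

lemma islimpt_hyp: assumes "v \<noteq> (0::real^3)" "x \<bullet> v = 0" shows "x islimpt {y. y \<bullet> v \<noteq> 0}"
proof (rule islimpt_approachable[THEN iffD2], intro allI impI)
  fix e :: real assume e: "e > 0"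
  define x' where "x' = x + (e / (2 * norm v)) *\<^sub>R v"
  have nv: "norm v > 0" using assms by simp
  have "x' \<bullet> v = (e / (2 * norm v)) * (v \<bullet> v)"
    unfolding x'_def using assms by (simp add: inner_add_left)
  moreover have "(e / (2 * norm v)) * (v \<bullet> v) \<noteq> 0" using nv e assms by simp
  ultimately have x'v: "x' \<bullet> v \<noteq> 0" by simp
  have dist: "dist x' x = e / 2" unfolding x'_def dist_norm using nv e by simp
  show "\<exists>x'\<in>{y. y \<bullet> v \<noteq> 0}. x' \<noteq> x \<and> dist x' x < e"
    using x'v dist e by (intro bexI[of _ x']) auto
qed

lemma hasc_H: "hasc (\<lambda>y. fps_const cv * fps_X * Gf (y \<bullet> y0) * Gf (y \<bullet> b) * Pf k y)"
proof -
  have hP: "hasc (\<lambda>y. Pf k y)"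
    unfolding Pf_def using Ico_finite hasc_negpow by (intro hasc_prod) auto
  show ?thesis
    by (intro hasc_mult hasc_const hasc_Gf hP)
qed

lemma divdiff_qn:
  assumes v: "v \<in> Rplus"
  shows "divdiff v (\<lambda>x. c * qn k y0 n x) x =
    c * fps_nth (fps_const (2 * (y0 \<bullet> v) / (v \<bullet> v)) * fps_X * Gf (x \<bullet> y0) * Gf (x \<bullet> refl v y0) * Pf k x) n"
proof -
  define H where "H = (\<lambda>y. c * fps_nth (fps_const (2 * (y0 \<bullet> v) / (v \<bullet> v)) * fps_X * Gf (y \<bullet> y0) * Gf (y \<bullet> refl v y0) * Pf k y) n)"
  have d: "\<And>y. y \<bullet> v \<noteq> 0 \<Longrightarrow> (c * qn k y0 n y - c * qn k y0 n (refl v y)) / (y \<bullet> v) = H y"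
    unfolding H_def qn_diff[OF v] by simp
  show ?thesis
  proof (cases "x \<bullet> v = 0")
    case False
    then show ?thesis unfolding divdiff_def using d[OF False] H_def by simp
  next
    case True
    define S where "S = {y. y \<bullet> v \<noteq> 0}"
    have v0: "v \<noteq> 0" using Rplus_nz[OF v] by auto
    have cont: "continuous_on UNIV H"
      unfolding H_def using hasc_H unfolding hasc_def by (intro continuous_on_mult_left) blast
    then have "(H \<longlongrightarrow> H x) (at x)"
      by (simp add: continuous_on_eq_continuous_at isCont_def)
    then have tH: "(H \<longlongrightarrow> H x) (at x within S)"
      by (rule tendsto_within_subset) simp
    have ev: "\<forall>\<^sub>F y in at x within S. H y = (c * qn k y0 n y - c * qn k y0 n (refl v y)) / (y \<bullet> v)"
      unfolding eventually_at_filter S_def using d by simp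
    have t: "((\<lambda>y. (c * qn k y0 n y - c * qn k y0 n (refl v y)) / (y \<bullet> v)) \<longlongrightarrow> H x) (at x within S)"
      using tendsto_cong[OF ev] tH by simp
    have nt: "\<not> trivial_limit (at x within S)"
      unfolding trivial_limit_within S_def using islimpt_hyp[OF v0 True] by simp
    have "Lim (at x within S) (\<lambda>y. (c * qn k y0 n y - c * qn k y0 n (refl v y)) / (y \<bullet> v)) = H x"
      by (rule tendsto_Lim[OF nt t])
    then show ?thesis unfolding divdiff_def S_def H_def using True by simp
  qed
qed

lemma dunkl_qn:
  assumes y0: "y0 \<in> Ico"
  shows "dunkl k i (\<lambda>x. c * qn k y0 (Suc m) x) =
    (\<lambda>x. (c * (of_nat (Suc m) + 11 * k - k * (-1) ^ m) * y0 $ i) * qn k y0 m x)"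
proof (rule ext)
  fix x
  define a where "a = x \<bullet> y0"
  define G where "G = Gf a"
  define Gm where "Gm = Gf (- a)"
  define P where "P = Pf k x"
  define X where "X = (fps_X :: real fps)"
  define A where "A = (\<Sum>y\<in>Ico. Gf (x \<bullet> y))"
  define K where "K = (\<Sum>y\<in>Ico. fps_const (x \<bullet> y) * Gf (x \<bullet> y))"
  define S1 where "S1 = (\<Sum>y\<in>Ico. fps_const (y $ i) * Gf (x \<bullet> y))"
  define cv where "cv = (\<lambda>v. 2 * (y0 \<bullet> v) / (v \<bullet> v))"
  define S2 where "S2 = (\<Sum>v\<in>Rplus. fps_const (cv v * v $ i) * Gf (x \<bullet> refl v y0))"
  define yi where "yi = fps_const (y0 $ i)"
  define kk where "kk = fps_const k"
  define ca where "ca = fps_const a"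
  define N where "N = Suc m"
  define Dv where "Dv = (\<lambda>v. fps_const (cv v) * fps_X * Gf (x \<bullet> y0) * Gf (x \<bullet> refl v y0) * Pf k x)"
  define LHS where "LHS = yi * X * G * G * P + G * P * (kk * X * S1) + kk * (X * G * P * S2)"
  define T where "T = fps_deriv (X * G * P) + 11 * kk * G * P - kk * Gm * P"
  have sumk: "(\<Sum>y\<in>Ico. fps_const (k * y $ i) * fps_X * Gf (x \<bullet> y)) = kk * X * S1"
    unfolding S1_def kk_def X_def sum_distrib_left
    by (intro sum.cong refl) (simp only: fps_const_mult[symmetric] ac_simps)
  have D1: "fps_const (y0 $ i) * fps_X * Gf (x \<bullet> y0) * Gf (x \<bullet> y0) * Pf k x +
       Gf (x \<bullet> y0) * (Pf k x * (\<Sum>y\<in>Ico. fps_const (k * y $ i) * fps_X * Gf (x \<bullet> y)))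
     = yi * X * G * G * P + G * P * (kk * X * S1)"
    unfolding sumk yi_def X_def G_def a_def P_def by (simp only: ac_simps)
  have S2e: "X * G * P * S2 = (\<Sum>v\<in>Rplus. fps_const (v $ i) * Dv v)"
    unfolding S2_def Dv_def sum_distrib_left X_def G_def a_def P_def
    by (intro sum.cong refl) (simp only: fps_const_mult[symmetric] ac_simps)
  have "dunkl k i (\<lambda>x. c * qn k y0 N x) x =
      c * fps_nth (yi * X * G * G * P + G * P * (kk * X * S1)) N + k * (\<Sum>v\<in>Rplus. c * fps_nth (Dv v) N * v $ i)"
    unfolding dunkl_def partial_qn D1 Dv_def cv_def
    by (simp add: divdiff_qn)
  also have "\<dots> = c * fps_nth LHS N"
    unfolding LHS_def S2e kk_def
    by (simp add: fps_sum_nth sum_distrib_left algebra_simps)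
  finally have step1: "dunkl k i (\<lambda>x. c * qn k y0 N x) x = c * fps_nth LHS N" .
  have h1: "ca * X * G = G - 1" unfolding ca_def X_def G_def by (rule Gf_rel)
  have h2: "- ca * X * Gm = Gm - 1" unfolding ca_def X_def Gm_def using Gf_rel[of "- a"] by simp
  have h3: "X * K = A - 12"
  proof -
    have "X * K = (\<Sum>y\<in>Ico. Gf (x \<bullet> y) - 1)"
      unfolding K_def X_def sum_distrib_left
    proof (intro sum.cong refl)
      fix y show "fps_X * (fps_const (x \<bullet> y) * Gf (x \<bullet> y)) = Gf (x \<bullet> y) - 1"
        using Gf_rel[of "x \<bullet> y"] by (simp only: ac_simps)
    qed
    also have "\<dots> = A - of_nat (card Ico)" unfolding A_def by (simp add: sum_subtractf)
    finally show ?thesis by (simp add: Ico_card)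
  qed
  have h4: "S1 + S2 = yi * (A - 2 * Gm)"
  proof -
    define B where "B = Ico - {- y0}"
    have ny0: "- y0 \<in> Ico" using neg_Ico[OF y0] by simp
    have S2': "S2 = (\<Sum>y\<in>B. fps_const ((y0 - y) $ i) * Gf (x \<bullet> y))"
    proof -
      have "S2 = (\<Sum>v\<in>Rplus. (\<lambda>y. fps_const ((y0 - y) $ i) * Gf (x \<bullet> y)) (refl v y0))"
        unfolding S2_def cv_def refl_diff by simp
      also have "\<dots> = (\<Sum>y\<in>B. fps_const ((y0 - y) $ i) * Gf (x \<bullet> y))"
        unfolding B_def by (rule orbit_sum[OF y0]) simp
      finally show ?thesis .
    qed
    have S1': "S1 = fps_const ((- y0) $ i) * Gm + (\<Sum>y\<in>B. fps_const (y $ i) * Gf (x \<bullet> y))"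
      unfolding S1_def B_def Gm_def a_def using sum.remove[OF Ico_finite ny0, of "\<lambda>y. fps_const (y $ i) * Gf (x \<bullet> y)"]
      by simp
    have A': "A = Gm + (\<Sum>y\<in>B. Gf (x \<bullet> y))"
      unfolding A_def B_def Gm_def a_def using sum.remove[OF Ico_finite ny0, of "\<lambda>y. Gf (x \<bullet> y)"]
      by simp
    have sB: "(\<Sum>y\<in>B. fps_const (y $ i) * Gf (x \<bullet> y)) + (\<Sum>y\<in>B. fps_const ((y0 - y) $ i) * Gf (x \<bullet> y))
        = yi * (\<Sum>y\<in>B. Gf (x \<bullet> y))"
      unfolding sum.distrib[symmetric] yi_def sum_distrib_left
      by (intro sum.cong refl) (simp add: distrib_right[symmetric])
    have "fps_const ((- y0) $ i) = - yi" unfolding yi_def by simp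
    then show ?thesis unfolding S1' S2' A' using sB by algebra
  qed
  have alg: "LHS = yi * X * (G * P + X * (ca * G * G * P + G * (kk * P * K)) + 11 * kk * G * P - kk * Gm * P)"
    unfolding LHS_def by (rule key_alg[OF h1 h2 h3 h4])
  have dG: "fps_deriv G = ca * G * G" unfolding G_def ca_def by (rule Gf_deriv)
  have dP: "fps_deriv P = P * (kk * K)"
  proof -
    have "fps_deriv P = P * (\<Sum>y\<in>Ico. fps_const (k * (x \<bullet> y)) * Gf (x \<bullet> y))"
      unfolding P_def Pf_def
      by (rule fps_deriv_prod[OF Ico_finite]) (simp add: negpow_deriv ac_simps)
    also have "(\<Sum>y\<in>Ico. fps_const (k * (x \<bullet> y)) * Gf (x \<bullet> y)) = kk * K"
      unfolding K_def kk_def sum_distrib_left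
      by (intro sum.cong refl) (simp only: fps_const_mult[symmetric] ac_simps)
    finally show ?thesis .
  qed
  have dXGP: "fps_deriv (X * G * P) = G * P + X * (ca * G * G * P + G * (kk * P * K))"
  proof -
    have "fps_deriv (X * G * P) = X * G * fps_deriv P + (X * fps_deriv G + fps_deriv X * G) * P"
      by (simp only: fps_deriv_mult)
    also have "\<dots> = G * P + X * (ca * G * G * P + G * (kk * P * K))"
      unfolding dG dP X_def fps_deriv_fps_X by algebra
    finally show ?thesis .
  qed
  have LT: "LHS = yi * (X * T)"
    unfolding alg T_def dXGP by algebra
  have q: "fps_nth (G * P) m = qn k y0 m x" unfolding G_def P_def a_def qn_eq ..
  have qm: "fps_nth (Gm * P) m = (-1) ^ m * qn k y0 m x"
    unfolding Gm_def P_def a_def by (rule qn_sign)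
  have n11: "11 * kk * G * P = fps_const (11 * k) * (G * P)"
    unfolding kk_def by (simp add: numeral_fps_const mult.assoc)
  have nT: "fps_nth T m = of_nat (Suc m) * qn k y0 m x + 11 * k * qn k y0 m x - k * ((-1) ^ m * qn k y0 m x)"
  proof -
    have d1: "fps_nth (fps_deriv (X * G * P)) m = of_nat (Suc m) * qn k y0 m x"
      unfolding fps_deriv_nth X_def q[symmetric] by (simp add: mult.assoc)
    have d2: "fps_nth (kk * Gm * P) m = k * ((-1) ^ m * qn k y0 m x)"
      unfolding kk_def qm[symmetric] by (simp add: mult.assoc)
    show ?thesis by (simp only: T_def n11 fps_sub_nth fps_add_nth fps_mult_left_const_nth d1 d2 q)
  qed
  have "c * fps_nth LHS N = c * (y0 $ i * fps_nth T m)"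
    unfolding LT N_def yi_def X_def by simp
  also have "\<dots> = (c * (of_nat (Suc m) + 11 * k - k * (-1) ^ m) * y0 $ i) * qn k y0 m x"
    unfolding nT by (simp add: algebra_simps)
  finally show "dunkl k i (\<lambda>x. c * qn k y0 (Suc m) x) x = (c * (of_nat (Suc m) + 11 * k - k * (-1) ^ m) * y0 $ i) * qn k y0 m x"
    using step1 unfolding N_def by simp
qed

lemma nu_Suc: "nu k (Suc m) = (of_nat (Suc m) + 11 * k - k * (-1) ^ m) * nu k m"
proof (cases "even m")
  case True
  then obtain j where m: "m = 2 * j" by (auto elim: evenE)
  have d: "Suc m div 2 = j" "(Suc m + 1) div 2 = Suc j" "m div 2 = j" "(m + 1) div 2 = j" using m by auto
  show ?thesis unfolding nu_def d using m
    by (simp add: pochhammer_Suc algebra_simps)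
next
  case False
  then obtain j where m: "m = 2 * j + 1" by (auto elim: oddE)
  have d: "Suc m div 2 = Suc j" "(Suc m + 1) div 2 = Suc j" "m div 2 = j" "(m + 1) div 2 = Suc j" using m by auto
  show ?thesis unfolding nu_def d using m
    by (simp add: pochhammer_Suc algebra_simps)
qed

lemma nu_pos: assumes "k \<ge> 0" shows "nu k m > 0"
proof -
  have "pochhammer (6 * k + 1) (m div 2) > 0" using assms by (intro pochhammer_pos) simp
  moreover have "pochhammer (5 * k + 1/2) ((m + 1) div 2) > 0" using assms by (intro pochhammer_pos) simp
  ultimately show ?thesis unfolding nu_def by simp
qed

lemma dunkl_iter:
  assumes y0: "y0 \<in> Ico" and k: "k \<ge> 0"
  shows "(dunkl k i ^^ j) (\<lambda>x. c * qn k y0 (m + j) x) =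
         (\<lambda>x. (c * (nu k (m + j) / nu k m) * (y0 $ i) ^ j) * qn k y0 m x)"
proof (induction j arbitrary: c)
  case 0
  have "nu k m \<noteq> 0" using nu_pos[OF k] by (metis less_irrefl)
  then show ?case by simp
next
  case (Suc j)
  have nz: "nu k m \<noteq> 0" using nu_pos[OF k] by (metis less_irrefl)
  have "(dunkl k i ^^ Suc j) (\<lambda>x. c * qn k y0 (m + Suc j) x) =
        (dunkl k i ^^ j) (dunkl k i (\<lambda>x. c * qn k y0 (Suc (m + j)) x))"
    by (simp only: add_Suc_right funpow_Suc_right o_apply)
  also have "\<dots> = (dunkl k i ^^ j) (\<lambda>x. (c * (of_nat (Suc (m + j)) + 11 * k - k * (-1) ^ (m + j)) * y0 $ i) * qn k y0 (m + j) x)"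
    by (simp only: dunkl_qn[OF y0])
  also have "\<dots> = (\<lambda>x. ((c * (of_nat (Suc (m + j)) + 11 * k - k * (-1) ^ (m + j)) * y0 $ i) * (nu k (m + j) / nu k m) * (y0 $ i) ^ j) * qn k y0 m x)"
    by (rule Suc.IH)
  also have "\<dots> = (\<lambda>x. (c * (nu k (m + Suc j) / nu k m) * (y0 $ i) ^ Suc j) * qn k y0 m x)"
    by (simp add: nu_Suc ac_simps)
  finally show ?case .
qed

theorem mainTheorem5:
  fixes \<kappa> \<omega> :: real and p :: "nat \<times> nat \<times> nat \<Rightarrow> real" and n :: nat and y0 :: "real^3"
  assumes "\<kappa> \<ge> 0" and "\<omega> > 0" and "homogeneous p n" and "y0 \<in> Ico"
  shows "pairing \<kappa> \<omega> p (qn \<kappa> y0 n) = (2 * \<omega>) powi (- int n) * nu \<kappa> n * poly_eval p y0"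
proof -
  note k = assms(1) and y0 = assms(4)
  have nz: "\<And>m. nu \<kappa> m \<noteq> 0" using nu_pos[OF k] by (metis less_irrefl)
  have nu0: "nu \<kappa> 0 = 1" by (simp add: nu_def)
  have key: "((dunkl \<kappa> 1 ^^ a) ((dunkl \<kappa> 2 ^^ b) ((dunkl \<kappa> 3 ^^ c) (qn \<kappa> y0 n)))) 0
      = nu \<kappa> n * ((y0 $ 1) ^ a * (y0 $ 2) ^ b * (y0 $ 3) ^ c)" if abc: "a + b + c = n" for a b c
  proof -
    define C3 where "C3 = 1 * (nu \<kappa> ((a + b) + c) / nu \<kappa> (a + b)) * (y0 $ 3) ^ c"
    define C2 where "C2 = C3 * (nu \<kappa> (a + b) / nu \<kappa> a) * (y0 $ 2) ^ b"
    define C1 where "C1 = C2 * (nu \<kappa> (0 + a) / nu \<kappa> 0) * (y0 $ 1) ^ a"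
    have q: "qn \<kappa> y0 n = (\<lambda>x. 1 * qn \<kappa> y0 ((a + b) + c) x)" using abc by simp
    have s3: "(dunkl \<kappa> 3 ^^ c) (\<lambda>x. 1 * qn \<kappa> y0 ((a + b) + c) x) = (\<lambda>x. C3 * qn \<kappa> y0 (a + b) x)"
      unfolding C3_def by (rule dunkl_iter[OF y0 k])
    have s2: "(dunkl \<kappa> 2 ^^ b) (\<lambda>x. C3 * qn \<kappa> y0 (a + b) x) = (\<lambda>x. C2 * qn \<kappa> y0 a x)"
      unfolding C2_def by (rule dunkl_iter[OF y0 k])
    have s1': "(dunkl \<kappa> 1 ^^ a) (\<lambda>x. C2 * qn \<kappa> y0 (0 + a) x) = (\<lambda>x. C1 * qn \<kappa> y0 0 x)"
      unfolding C1_def by (rule dunkl_iter[OF y0 k])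
    then have s1: "(dunkl \<kappa> 1 ^^ a) (\<lambda>x. C2 * qn \<kappa> y0 a x) = (\<lambda>x. C1 * qn \<kappa> y0 0 x)" by simp
    have "((dunkl \<kappa> 1 ^^ a) ((dunkl \<kappa> 2 ^^ b) ((dunkl \<kappa> 3 ^^ c) (qn \<kappa> y0 n)))) 0 = C1"
      unfolding q s3 s2 s1 by (simp add: qn_0)
    also have "C1 = nu \<kappa> n * ((y0 $ 1) ^ a * (y0 $ 2) ^ b * (y0 $ 3) ^ c)"
      unfolding C1_def C2_def C3_def using nz abc nu0 by (simp add: field_simps)
    finally show ?thesis .
  qed
  have pw: "(2 * \<omega>) powi (- int n) = (1 / (2 * \<omega>)) ^ n"
    by (simp add: power_int_minus power_one_over inverse_eq_divide)
  have "pairing \<kappa> \<omega> p (qn \<kappa> y0 n) =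
      (\<Sum>\<alpha>\<in>{\<alpha>. p \<alpha> \<noteq> 0}. (1 / (2 * \<omega>)) ^ n * nu \<kappa> n * (p \<alpha> * mono_eval \<alpha> y0))"
    unfolding pairing_def
  proof (intro sum.cong refl)
    fix \<alpha> assume "\<alpha> \<in> {\<alpha>. p \<alpha> \<noteq> 0}"
    then have deg: "mdeg \<alpha> = n" using assms(3) unfolding homogeneous_def by blast
    obtain a b c where \<alpha>: "\<alpha> = (a, b, c)" by (cases \<alpha>) auto
    have abc: "a + b + c = n" using deg unfolding \<alpha> mdeg_def by simp
    show "(case \<alpha> of (a, b, c) \<Rightarrow> p \<alpha> * (1 / (2 * \<omega>)) ^ (a + b + c) *
            (dunkl \<kappa> 1 ^^ a) ((dunkl \<kappa> 2 ^^ b) ((dunkl \<kappa> 3 ^^ c) (qn \<kappa> y0 n))) 0) =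
          (1 / (2 * \<omega>)) ^ n * nu \<kappa> n * (p \<alpha> * mono_eval \<alpha> y0)"
      unfolding \<alpha> using key[OF abc] abc by (simp add: mono_eval_def)
  qed
  also have "\<dots> = (2 * \<omega>) powi (- int n) * nu \<kappa> n * poly_eval p y0"
    unfolding poly_eval_def pw by (simp add: sum_distrib_left)
  finally show ?thesis .
qed


end
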